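(* In the curved-exam game described in the context, for every student $i$, every $x_i\in(\alpha_i,1]$ and every opponent profile $x_{-i}\in[0,1]^{n-1}$, we have $U_i(\alpha_i,x_{-i})>U_i(x_i,x_{-i})$; that is, every strategy in $(\alpha_i,1]$ is strictly dominated by $\alpha_i$.
   Context: The curved-exam game: fix $n\ge2$, abilities $\alpha_1,\dots,\alpha_n\in(0,1)$, target mean $m\in(0,1)$. Student $i$ chooses $x_i\in[0,1]$; $\bar x=\frac1n\sum_j x_j$, $\bar x_{-i}=\frac1{n-1}\sum_{j\ne i}x_j$. Grade $G_i(x)=x_i+\max(m-\bar x,0)=\max\big(m+\frac{n-1}{n}(x_i-\bar x_{-i}),x_i\big)$ (not truncated at 1); payoff $U_i(x)=G_i(x)^{\alpha_i}(1-x_i)^{1-\alpha_i}$. *)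

theory Defs
  imports Complex_Main
begin

(* Students are indexed by {0..<n}; a strategy profile is x :: nat => real,
   only the values x j for j < n are relevant. *)

definition mean_score :: "nat \<Rightarrow> (nat \<Rightarrow> real) \<Rightarrow> real" where
  "mean_score n x = (\<Sum>j<n. x j) / real n"

definition grade :: "nat \<Rightarrow> real \<Rightarrow> (nat \<Rightarrow> real) \<Rightarrow> nat \<Rightarrow> real" where
  "grade n m x i = x i + max (m - mean_score n x) 0"

definition payoff :: "nat \<Rightarrow> real \<Rightarrow> (nat \<Rightarrow> real) \<Rightarrow> (nat \<Rightarrow> real) \<Rightarrow> nat \<Rightarrow> real" where
  "payoff n m \<alpha> x i = (grade n m x i) powr (\<alpha> i) * (1 - x i) powr (1 - \<alpha> i)"

end

theory Submission
  imports Defs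
begin

lemma sum_upd: fixes n i :: nat and x :: "nat \<Rightarrow> real" assumes "i < n"
  shows "(\<Sum>j<n. (x(i := y)) j) = (\<Sum>j<n. (x(i := 0)) j) + (y::real)"
proof -
  have iin: "i \<in> {..<n}" using assms by simp
  have "(\<Sum>j<n. (x(i := y)) j) = (x(i:=y)) i + sum (x(i := y)) ({..<n}-{i})"
    using sum.remove[OF finite_lessThan iin] by blast
  moreover have "(\<Sum>j<n. (x(i := 0)) j) = (x(i:=0)) i + sum (x(i := 0)) ({..<n}-{i})"
    using sum.remove[OF finite_lessThan iin] by blast
  moreover have "sum (x(i := y)) ({..<n}-{i}) = sum (x(i := 0)) ({..<n}-{i})"
    by (rule sum.cong) auto
  ultimately show ?thesis by simp
qed

lemma key:
  fixes a G H t :: real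
  assumes "0 < a" "a < 1" "a < t" "t < 1" "a \<le> G" "0 < H" "H \<le> G + (t - a)"
  shows "H powr a * (1 - t) powr (1 - a) < G powr a * (1 - a) powr (1 - a)"
proof -
  define d where "d = t - a"
  have d: "d > 0" using assms d_def by simp
  have G: "G > 0" using assms by simp
  have "H powr a \<le> (G + d) powr a" using assms d_def by (intro powr_mono2) auto
  hence le: "H powr a * (1 - t) powr (1 - a) \<le> (G + d) powr a * (1 - t) powr (1 - a)"
    by (rule mult_right_mono) auto
  have l1: "ln (1 + d / G) < d / G"
    using d G by (intro ln_add_one_self_less_self) auto
  have e1: "ln (1 + d / G) = ln (G + d) - ln G"
  proof -
    have "1 + d / G = (G + d) / G" using G by (simp add: field_simps)
    thus ?thesis using G d by (simp add: ln_div)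
  qed
  have l2: "ln ((1 - t) / (1 - a)) \<le> (1 - t) / (1 - a) - 1"
    using assms by (intro ln_le_minus_one) auto
  have e2: "ln ((1 - t) / (1 - a)) = ln (1 - t) - ln (1 - a)"
    using assms by (simp add: ln_div)
  have e3: "(1 - t) / (1 - a) - 1 = - d / (1 - a)"
    unfolding d_def using assms by (simp add: field_simps)
  have f1: "a * (ln (G + d) - ln G) < a * (d / G)"
    using l1 e1 assms by (intro mult_strict_left_mono) auto
  have f2: "(1 - a) * (ln (1 - t) - ln (1 - a)) \<le> (1 - a) * (- d / (1 - a))"
    using l2 e2 e3 assms by (intro mult_left_mono) auto
  have f3: "a * (d / G) \<le> d"
  proof -
    have "a / G \<le> 1" using assms G by simp
    hence "(a / G) * d \<le> 1 * d" using d by (intro mult_right_mono) auto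
    thus ?thesis by simp
  qed
  have f4: "(1 - a) * (- d / (1 - a)) = - d" using assms by simp
  have f5: "a * (ln (G + d) - ln G) = a * ln (G + d) - a * ln G" by (rule right_diff_distrib)
  have f6: "(1 - a) * (ln (1 - t) - ln (1 - a)) = (1 - a) * ln (1 - t) - (1 - a) * ln (1 - a)"
    by (rule right_diff_distrib)
  have "a * ln (G + d) + (1 - a) * ln (1 - t) < a * ln G + (1 - a) * ln (1 - a)"
    using f1 f2 f3 f4 f5 f6 by linarith
  hence "exp (a * ln (G + d) + (1 - a) * ln (1 - t)) < exp (a * ln G + (1 - a) * ln (1 - a))"
    by simp
  hence "(G + d) powr a * (1 - t) powr (1 - a) < G powr a * (1 - a) powr (1 - a)"
  proof -
    have p1: "(G + d) powr a = exp (a * ln (G + d))" using G d by (simp add: powr_def)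
    have p2: "(1 - t) powr (1 - a) = exp ((1 - a) * ln (1 - t))" using assms by (simp add: powr_def)
    have p3: "G powr a = exp (a * ln G)" using G by (simp add: powr_def)
    have p4: "(1 - a) powr (1 - a) = exp ((1 - a) * ln (1 - a))" using assms by (simp add: powr_def)
    show ?thesis unfolding p1 p2 p3 p4 exp_add[symmetric] by fact
  qed
  with le show ?thesis by (rule le_less_trans)
qed

theorem mainTheorem5:
  fixes n :: nat and m :: real and \<alpha> :: "nat \<Rightarrow> real" and x :: "nat \<Rightarrow> real" and i :: nat and t :: real
  assumes "n \<ge> 2"
    and "\<forall>j<n. 0 < \<alpha> j \<and> \<alpha> j < 1"
    and "0 < m" and "m < 1"
    and "i < n"
    and "\<forall>j<n. j \<noteq> i \<longrightarrow> 0 \<le> x j \<and> x j \<le> 1"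
    and "\<alpha> i < t" and "t \<le> 1"
  shows "payoff n m \<alpha> (x(i := \<alpha> i)) i > payoff n m \<alpha> (x(i := t)) i"
proof -
  define a where "a = \<alpha> i"
  have a: "0 < a" "a < 1" using assms a_def by auto
  define M where "M = (\<Sum>j<n. (x(i := 0)) j)"
  have np: "real n > 0" using assms by simp
  have g: "grade n m (x(i := y)) i = y + max (m - (M + y) / real n) 0" for y
    unfolding grade_def mean_score_def M_def by (subst sum_upd[OF assms(5)]) simp
  define G where "G = a + max (m - (M + a) / real n) 0"
  define H where "H = t + max (m - (M + t) / real n) 0"
  have "(M + a) / real n \<le> (M + t) / real n" using assms a_def np
    by (simp add: divide_right_mono)
  hence HG: "H \<le> G + (t - a)" unfolding G_def H_def by linarith
  have aG: "a \<le> G" unfolding G_def by simp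
  have Hp: "0 < H" unfolding H_def using a assms a_def by linarith
  have PG: "payoff n m \<alpha> (x(i := \<alpha> i)) i = G powr a * (1 - a) powr (1 - a)"
    unfolding payoff_def g G_def a_def by simp
  have PH: "payoff n m \<alpha> (x(i := t)) i = H powr a * (1 - t) powr (1 - a)"
    unfolding payoff_def g H_def a_def by simp
  show ?thesis
  proof (cases "t = 1")
    case True
    have "0 < G powr a * (1 - a) powr (1 - a)" using a aG by simp
    moreover have "H powr a * (1 - t) powr (1 - a) = 0" using True by simp
    ultimately show ?thesis unfolding PG PH by linarith
  next
    case False
    have "a < t" "t < 1" using False assms a_def by auto
    then show ?thesis unfolding PG PH using key[OF a _ _ aG Hp HG] by blast
  qed
qed

end
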